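(* Fix $\alpha\in(0,1)$ and consider the Monte Carlo permutation test described in the context, and suppose $\mathbb{P}(q(\mathcal{X})<1)>0$. Then: (i) If $B\ge 2$ satisfies $k_B-k_{B-1}=1$ and $k_{B+1}-k_B=0$, then $\mathrm{Pow}(B-1)<\mathrm{Pow}(B)$ and $\mathrm{Pow}(B+1)<\mathrm{Pow}(B)$, i.e. $\mathrm{Pow}(B)$ is a strict local maximum of $B\mapsto\mathrm{Pow}(B)$. (ii) There exist infinitely many integers $B\ge 2$ with $k_{B-1}<k_B=k_{B+1}$; consequently the function $B\mapsto \mathrm{Pow}(B)$ has infinitely many strict local maxima.
   Context: Let $\mathcal{X}$ be a random observed dataset taking values in a space on which a finite group $\mathcal{G}$ acts (write $\mathcal{X}^\pi$ for the action of $\pi\in\mathcal{G}$; the identity of $\mathcal{G}$ fixes every dataset), and let $T$ be a real-valued test statistic. Fix $\alpha\in(0,1)$. For an integer $B\ge1$, let $\pi_1,\dots,\pi_B$ be i.i.d. uniform on $\mathcal{G}$, independent of $\mathcal{X}$. The Monte Carlo permutation $p$-value is $p_B(\mathcal{X})=\bigl(1+\sum_{i=1}^B \mathbf{1}\{T(\mathcal{X}^{\pi_i})\ge T(\mathcal{X})\}\bigr)/(B+1)$, and the test rejects iff $p_B(\mathcal{X})\le\alpha$. Define $q(\mathcal{X})=\mathbb{P}(T(\mathcal{X}^\pi)\ge T(\mathcal{X})\mid \mathcal{X})$ for $\pi$ uniform on $\mathcal{G}$ independent of $\mathcal{X}$ (so $q(\mathcal{X})\in[1/|\mathcal{G}|,1]$),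 $R_B=\sum_{i=1}^B \mathbf{1}\{T(\mathcal{X}^{\pi_i})\ge T(\mathcal{X})\}$ (so $R_B\mid\mathcal{X}\sim\mathrm{Binomial}(B,q(\mathcal{X}))$), and the critical count $k_B=\lfloor (B+1)\alpha\rfloor-1$ for integers $B\ge 0$. Then $\{p_B(\mathcal{X})\le\alpha\}=\{R_B\le k_B\}$. The conditional rejection probability is $\phi_B(\mathcal{X})=\mathbb{P}(R_B\le k_B\mid\mathcal{X})$ and the (unconditional) power is $\mathrm{Pow}(B)=\mathbb{E}[\phi_B(\mathcal{X})]=\mathbb{E}\bigl[\mathbb{P}(\mathrm{Binomial}(B,q(\mathcal{X}))\le k_B\mid\mathcal{X})\bigr]$, for $B\ge1$. *)

theory Defs
  imports "HOL-Probability.Probability" "HOL-Algebra.Group"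
begin

definition qval :: "('g, 'b) monoid_scheme \<Rightarrow> ('g \<Rightarrow> 'x \<Rightarrow> 'x) \<Rightarrow> ('x \<Rightarrow> real) \<Rightarrow> 'x \<Rightarrow> real" where
  "qval G act T x = real (card {g \<in> carrier G. T (act g x) \<ge> T x}) / real (card (carrier G))"

definition kcrit :: "real \<Rightarrow> nat \<Rightarrow> int" where
  "kcrit \<alpha> B = \<lfloor>(real B + 1) * \<alpha>\<rfloor> - 1"

definition rejprob :: "real \<Rightarrow> nat \<Rightarrow> real \<Rightarrow> real" where
  "rejprob \<alpha> B p = measure_pmf.prob (binomial_pmf B p) {j. int j \<le> kcrit \<alpha> B}"

definition Pow :: "'w measure \<Rightarrow> ('w \<Rightarrow> 'x) \<Rightarrow> ('g, 'b) monoid_scheme \<Rightarrow> ('g \<Rightarrow> 'x \<Rightarrow> 'x)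
    \<Rightarrow> ('x \<Rightarrow> real) \<Rightarrow> real \<Rightarrow> nat \<Rightarrow> real" where
  "Pow M X G act T \<alpha> B = (\<integral>w. rejprob \<alpha> B (qval G act T (X w)) \<partial>M)"

end

theory Submission
  imports Defs
begin

definition Sc :: "nat \<Rightarrow> nat \<Rightarrow> real \<Rightarrow> real" where
  "Sc n m p = (\<Sum>j<m. pmf (binomial_pmf n p) j)"

lemma Sc_Suc: "Sc n (Suc m) p = Sc n m p + pmf (binomial_pmf n p) m"
  by (simp add: Sc_def)

lemma Sc_0: "Sc n 0 p = 0" by (simp add: Sc_def)

lemma pmf_rec:
  assumes "0 \<le> p" "p \<le> 1"
  shows "pmf (binomial_pmf (Suc n) p) (Suc m) =
     (1-p) * pmf (binomial_pmf n p) (Suc m) + p * pmf (binomial_pmf n p) m"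
proof -
  consider "m < n" | "m = n" | "m > n" by linarith
  then show ?thesis
  proof cases
    case 1
    then obtain d where n: "n = m + Suc d" by (metis add_Suc_right less_imp_Suc_add)
    have e1: "Suc n - Suc m = Suc d" "n - Suc m = d" "n - m = Suc d" using n by auto
    show ?thesis using assms by (simp add: e1 algebra_simps)
  next
    case 2
    then show ?thesis using assms by simp
  next
    case 3
    then show ?thesis using assms by (simp add: binomial_eq_0)
  qed
qed

lemma Sc_rec:
  assumes "0 \<le> p" "p \<le> 1"
  shows "Sc (Suc n) (Suc m) p = (1-p) * Sc n (Suc m) p + p * Sc n m p"
proof (induction m)
  case 0
  then show ?case using assms by (simp add: Sc_def)
next
  case (Suc m)
  show ?case using Suc assms
    by (simp only: Sc_Suc[of "Suc n" "Suc m"] Sc_Suc[of n "Suc m"] pmf_rec) (simp add: Sc_Suc algebra_simps)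
qed

lemma Sc_up:
  assumes "0 \<le> p" "p \<le> 1"
  shows "Sc (Suc n) (Suc m) p = Sc n m p + (1-p) * pmf (binomial_pmf n p) m"
  using Sc_rec[OF assms, of n m] by (simp add: Sc_Suc algebra_simps)

lemma Sc_down:
  assumes "0 \<le> p" "p \<le> 1"
  shows "Sc (Suc n) (Suc m) p = Sc n (Suc m) p - p * pmf (binomial_pmf n p) m"
  using Sc_rec[OF assms, of n m] by (simp add: Sc_Suc algebra_simps)

lemma pmf_pos:
  assumes "0 < p" "p < 1" "j \<le> n"
  shows "pmf (binomial_pmf n p) j > 0"
  using assms by simp

lemma kc_ge: "0 < \<alpha> \<Longrightarrow> kcrit \<alpha> B \<ge> -1"
proof -
  assume "0 < \<alpha>"
  hence "0 \<le> (real B + 1) * \<alpha>" by simp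
  hence "0 \<le> \<lfloor>(real B + 1) * \<alpha>\<rfloor>" by simp
  thus ?thesis unfolding kcrit_def by linarith
qed

lemma kc_le: "\<alpha> < 1 \<Longrightarrow> 0 < \<alpha> \<Longrightarrow> kcrit \<alpha> B \<le> int B - 1"
proof -
  assume a: "\<alpha> < 1" "0 < \<alpha>"
  have "(real B + 1) * \<alpha> < real B + 1" using a by simp
  hence "\<lfloor>(real B + 1) * \<alpha>\<rfloor> < int B + 1"
    by (metis floor_less_iff of_int_1 of_int_of_nat_eq  of_int_add floor_le_iff le_floor_iff not_le  less_le_trans)
  thus ?thesis unfolding kcrit_def by simp
qed

lemma kc_mono: "0 < \<alpha> \<Longrightarrow> kcrit \<alpha> B \<le> kcrit \<alpha> (Suc B)"
  unfolding kcrit_def by (intro diff_right_mono floor_mono) simp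

lemma kc_step: "\<alpha> < 1 \<Longrightarrow> kcrit \<alpha> (Suc B) \<le> kcrit \<alpha> B + 1"
proof -
  assume a: "\<alpha> < 1"
  have "(real (Suc B) + 1) * \<alpha> = (real B + 1) * \<alpha> + \<alpha>" by (simp add: algebra_simps)
  hence "\<lfloor>(real (Suc B) + 1) * \<alpha>\<rfloor> \<le> \<lfloor>(real B + 1) * \<alpha>\<rfloor> + 1"
    using a by (smt (verit, best) floor_less_iff floor_correct of_int_add of_int_1)
  thus ?thesis unfolding kcrit_def by simp
qed

lemma rej_Sc:
  assumes "0 < \<alpha>"
  shows "rejprob \<alpha> B p = Sc B (nat (kcrit \<alpha> B + 1)) p"
proof -
  have "{j::nat. int j \<le> kcrit \<alpha> B} = {..<nat (kcrit \<alpha> B + 1)}"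
    using kc_ge[OF assms, of B] by auto
  thus ?thesis unfolding rejprob_def Sc_def by (simp add: measure_measure_pmf_finite)
qed

lemma kc_inf:
  assumes a0: "0 < \<alpha>" and a1: "\<alpha> < 1"
  shows "\<exists>m\<ge>N. kcrit \<alpha> m < kcrit \<alpha> (Suc m) \<and> kcrit \<alpha> (Suc m) = kcrit \<alpha> (Suc (Suc m))"
proof (rule ccontr)
  let ?k = "kcrit \<alpha>"
  assume H0: "\<not> ?thesis"
  have H: "?k (Suc m) < ?k (Suc (Suc m))" if "m \<ge> N" "?k m < ?k (Suc m)" for m
    using H0 that kc_mono[OF a0, of "Suc m"] by force
  have lo: "real_of_int (?k B) \<ge> (real B + 1) * \<alpha> - 2" for B
    using floor_correct[of "(real B + 1) * \<alpha>"] unfolding kcrit_def of_int_diff of_int_add of_int_1 by linarith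
  have hi: "real_of_int (?k B) \<le> (real B + 1) * \<alpha> - 1" for B
    unfolding kcrit_def using of_int_floor_le[of "(real B + 1) * \<alpha>"] by simp
  have "\<exists>m0\<ge>N. ?k m0 < ?k (Suc m0)"
  proof (rule ccontr)
    assume A: "\<not> ?thesis"
    have c: "?k (N + t) = ?k N" for t
    proof (induction t)
      case 0 then show ?case by simp
    next
      case (Suc t)
      have "\<not> ?k (N+t) < ?k (Suc (N+t))" using A le_add1 by blast
      hence "?k (Suc (N+t)) = ?k (N+t)" using kc_mono[OF a0, of "N+t"] by linarith
      then show ?case using Suc by simp
    qed
    obtain t where t: "real_of_int (?k N) + 2 < real t * \<alpha>"
      using ex_less_of_nat_mult[OF a0] by blast
    have l: "real_of_int (?k (N+t)) \<ge> (real (N+t) + 1) * \<alpha> - 2" by (rule lo)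
    have "(real (N+t) + 1) * \<alpha> \<ge> real t * \<alpha>" using a0 by (intro mult_right_mono) auto
    then show False using c t l by (simp only: c)
  qed
  then obtain m0 where m0: "m0 \<ge> N" "?k m0 < ?k (Suc m0)" by blast
  have step: "?k (m0+t) < ?k (Suc (m0+t))" for t
  proof (induction t)
    case 0 then show ?case using m0 by simp
  next
    case (Suc t)
    then show ?case using H[of "m0+t"] m0(1) by simp
  qed
  have grow: "?k (m0+t) \<ge> ?k m0 + int t" for t
  proof (induction t)
    case 0 then show ?case by simp
  next
    case (Suc t)
    then show ?case using step[of t] by simp
  qed
  have a2: "0 < 1 - \<alpha>" using a1 by simp
  obtain t where t: "(real m0 + 1) * \<alpha> + 1 < real t * (1 - \<alpha>)"
    using ex_less_of_nat_mult[OF a2] by blast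
  have g: "real_of_int (?k m0) + real t \<le> real_of_int (?k (m0+t))"
    using grow[of t] by linarith
  have km: "?k m0 \<ge> -1" by (rule kc_ge[OF a0])
  have e: "(real (m0+t) + 1) * \<alpha> = (real m0 + 1) * \<alpha> + real t * \<alpha>" by (simp add: algebra_simps)
  have e2: "real t * (1 - \<alpha>) = real t - real t * \<alpha>" by (simp add: algebra_simps)
  show False using hi[of "m0+t"] g km e e2 t by linarith
qed

theorem theorem1:
  fixes M :: "'w measure" and X :: "'w \<Rightarrow> 'x" and G :: "('g, 'b) monoid_scheme"
    and act :: "'g \<Rightarrow> 'x \<Rightarrow> 'x" and T :: "'x \<Rightarrow> real" and \<alpha> :: real
  assumes "prob_space M"
    and "group G" and "finite (carrier G)"
    and "\<And>x. act \<one>\<^bsub>G\<^esub> x = x"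
    and "\<And>g h x. g \<in> carrier G \<Longrightarrow> h \<in> carrier G \<Longrightarrow> act (g \<otimes>\<^bsub>G\<^esub> h) x = act g (act h x)"
    and "(\<lambda>w. T (X w)) \<in> borel_measurable M"
    and "\<And>g. g \<in> carrier G \<Longrightarrow> (\<lambda>w. T (act g (X w))) \<in> borel_measurable M"
    and "0 < \<alpha>" and "\<alpha> < 1"
    and "measure M {w \<in> space M. qval G act T (X w) < 1} > 0"
  shows "(\<forall>B\<ge>2. kcrit \<alpha> B - kcrit \<alpha> (B - 1) = 1 \<and> kcrit \<alpha> (B + 1) - kcrit \<alpha> B = 0 \<longrightarrow>
            Pow M X G act T \<alpha> (B - 1) < Pow M X G act T \<alpha> B \<and>
            Pow M X G act T \<alpha> (B + 1) < Pow M X G act T \<alpha> B)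
       \<and> infinite {B. B \<ge> 2 \<and> kcrit \<alpha> (B - 1) < kcrit \<alpha> B \<and> kcrit \<alpha> B = kcrit \<alpha> (B + 1)}
       \<and> infinite {B. B \<ge> 2 \<and> Pow M X G act T \<alpha> (B - 1) < Pow M X G act T \<alpha> B \<and>
                          Pow M X G act T \<alpha> (B + 1) < Pow M X G act T \<alpha> B}"
proof -
  define q where "q w = qval G act T (X w)" for w
  interpret P: prob_space M by fact
  have fin: "finite (carrier G)" by fact
  have one: "\<one>\<^bsub>G\<^esub> \<in> carrier G"
    using assms(2) by (simp add: group.is_monoid monoid.one_closed)
  have cpos: "card (carrier G) > 0" using fin one card_gt_0_iff by blast
  have q01: "0 < q w \<and> q w \<le> 1" for w
  proof -
    define A where "A = {g \<in> carrier G. T (X w) \<le> T (act g (X w))}"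
    have "\<one>\<^bsub>G\<^esub> \<in> A" using one assms(4) by (simp add: A_def)
    moreover have "A \<subseteq> carrier G" by (auto simp: A_def)
    ultimately have "card A > 0" "card A \<le> card (carrier G)"
      using fin by (auto intro: card_mono simp: card_gt_0_iff finite_subset)
    moreover have "q w = real (card A) / real (card (carrier G))"
      by (simp add: q_def qval_def A_def)
    ultimately show ?thesis using cpos by (simp add: divide_le_eq_1)
  qed
  have qeq: "q = (\<lambda>w. (\<Sum>g\<in>carrier G. if T (X w) \<le> T (act g (X w)) then 1 else 0) / real (card (carrier G)))"
  proof
    fix w
    have "real (card {g\<in>carrier G. T (X w) \<le> T (act g (X w))}) = (\<Sum>g\<in>{g\<in>carrier G. T (X w) \<le> T (act g (X w))}. (1::real))"
      by simp
    also have "\<dots> = (\<Sum>g\<in>carrier G. if T (X w) \<le> T (act g (X w)) then 1 else 0)"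
      by (rule sum.inter_filter[OF fin])
    finally show "q w = (\<Sum>g\<in>carrier G. if T (X w) \<le> T (act g (X w)) then 1 else 0) / real (card (carrier G))"
      by (simp add: q_def qval_def)
  qed
  have qmeas[measurable]: "q \<in> borel_measurable M"
    unfolding qeq
    by (intro borel_measurable_divide borel_measurable_sum borel_measurable_const measurable_If
        borel_measurable_le assms(6) assms(7)) auto
  have hform: "rejprob \<alpha> B (q w) = (\<Sum>j<nat (kcrit \<alpha> B + 1). real (B choose j) * q w ^ j * (1 - q w) ^ (B - j))" for B w
    using q01[of w] by (simp add: rej_Sc[OF assms(8)] Sc_def)
  have hmeas: "(\<lambda>w. rejprob \<alpha> B (q w)) \<in> borel_measurable M" for B
    unfolding hform by measurable
  have hint: "integrable M (\<lambda>w. rejprob \<alpha> B (q w))" for B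
  proof (rule P.integrable_const_bound[where B=1])
    show "AE w in M. norm (rejprob \<alpha> B (q w)) \<le> 1" by (simp add: rejprob_def)
    show "(\<lambda>w. rejprob \<alpha> B (q w)) \<in> borel_measurable M" by (rule hmeas)
  qed
  have PowE: "Pow M X G act T \<alpha> B = (\<integral>w. rejprob \<alpha> B (q w) \<partial>M)" for B
    by (simp add: Pow_def q_def)
  have pos: "0 < (\<integral>w. d w \<partial>M)" if dint: "integrable M d" and dnn: "\<And>w. 0 \<le> d w"
    and dpos: "\<And>w. q w < 1 \<Longrightarrow> 0 < d w" for d :: "'w \<Rightarrow> real"
  proof -
    have "0 \<le> (\<integral>w. d w \<partial>M)" by (intro integral_nonneg_AE AE_I2 dnn)
    moreover have "(\<integral>w. d w \<partial>M) \<noteq> 0"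
    proof
      assume "(\<integral>w. d w \<partial>M) = 0"
      then have "AE w in M. d w = 0" using integral_nonneg_eq_0_iff_AE[OF dint] dnn by simp
      then have "AE w in M. \<not> q w < 1"
        by eventually_elim (metis dpos less_irrefl)
      moreover have "{w\<in>space M. q w < 1} \<in> sets M" by measurable
      ultimately have "emeasure M {w\<in>space M. q w < 1} = 0"
        using AE_iff_measurable[of "{w\<in>space M. q w < 1}" M "\<lambda>w. \<not> q w < 1"] by auto
      hence "measure M {w\<in>space M. q w < 1} = 0" by (simp add: measure_def)
      with assms(10) show False by (simp add: q_def)
    qed
    ultimately show ?thesis by linarith
  qed
  have partI: "Pow M X G act T \<alpha> (B - 1) < Pow M X G act T \<alpha> B \<and>
            Pow M X G act T \<alpha> (B + 1) < Pow M X G act T \<alpha> B"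
    if B2: "B \<ge> 2" and h1: "kcrit \<alpha> B - kcrit \<alpha> (B - 1) = 1" and h2: "kcrit \<alpha> (B + 1) - kcrit \<alpha> B = 0" for B
  proof -
    obtain n where B: "B = Suc n" using B2 by (cases B) auto
    define m where "m = nat (kcrit \<alpha> n + 1)"
    have kn: "kcrit \<alpha> n \<ge> -1" by (rule kc_ge[OF assms(8)])
    have mB: "nat (kcrit \<alpha> (Suc n) + 1) = Suc m" using h1 kn unfolding B m_def by simp
    have mB1: "nat (kcrit \<alpha> (Suc (Suc n)) + 1) = Suc m" using h2 mB unfolding B by simp
    have mn: "m \<le> n" using kc_le[OF assms(9) assms(8), of "Suc n"] h1 kn unfolding B m_def by simp
    have e1: "rejprob \<alpha> (Suc n) (q w) - rejprob \<alpha> n (q w) = (1 - q w) * pmf (binomial_pmf n (q w)) m" for w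
      using Sc_up[of "q w" n m] q01[of w]
      by (simp add: rej_Sc[OF assms(8)] mB m_def[symmetric])
    have e2: "rejprob \<alpha> (Suc n) (q w) - rejprob \<alpha> (Suc (Suc n)) (q w) = q w * pmf (binomial_pmf (Suc n) (q w)) m" for w
      using Sc_down[of "q w" "Suc n" m] q01[of w]
      by (simp add: rej_Sc[OF assms(8)] mB mB1)
    have "Pow M X G act T \<alpha> (Suc n) - Pow M X G act T \<alpha> n
        = (\<integral>w. rejprob \<alpha> (Suc n) (q w) - rejprob \<alpha> n (q w) \<partial>M)"
      by (simp add: PowE Bochner_Integration.integral_diff[OF hint hint])
    also have "\<dots> = (\<integral>w. (1 - q w) * pmf (binomial_pmf n (q w)) m \<partial>M)"
      by (simp add: e1)
    also have "\<dots> > 0"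
    proof (rule pos)
      show "integrable M (\<lambda>w. (1 - q w) * pmf (binomial_pmf n (q w)) m)"
        using Bochner_Integration.integrable_diff[OF hint hint, of "Suc n" n] by (simp add: e1)
      show "0 \<le> (1 - q w) * pmf (binomial_pmf n (q w)) m" for w
        using q01[of w] by simp
      show "0 < (1 - q w) * pmf (binomial_pmf n (q w)) m" if "q w < 1" for w
        using q01[of w] that mn by (intro mult_pos_pos pmf_pos) auto
    qed
    finally have r1: "Pow M X G act T \<alpha> n < Pow M X G act T \<alpha> (Suc n)" by simp
    have "Pow M X G act T \<alpha> (Suc n) - Pow M X G act T \<alpha> (Suc (Suc n))
        = (\<integral>w. rejprob \<alpha> (Suc n) (q w) - rejprob \<alpha> (Suc (Suc n)) (q w) \<partial>M)"
      by (simp add: PowE Bochner_Integration.integral_diff[OF hint hint])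
    also have "\<dots> = (\<integral>w. q w * pmf (binomial_pmf (Suc n) (q w)) m \<partial>M)"
      by (simp add: e2)
    also have "\<dots> > 0"
    proof (rule pos)
      show "integrable M (\<lambda>w. q w * pmf (binomial_pmf (Suc n) (q w)) m)"
        using Bochner_Integration.integrable_diff[OF hint hint, of "Suc n" "Suc (Suc n)"] by (simp add: e2)
      show "0 \<le> q w * pmf (binomial_pmf (Suc n) (q w)) m" for w
        using q01[of w] by simp
      show "0 < q w * pmf (binomial_pmf (Suc n) (q w)) m" if "q w < 1" for w
        using q01[of w] that mn by (intro mult_pos_pos pmf_pos) auto
    qed
    finally have r2: "Pow M X G act T \<alpha> (Suc (Suc n)) < Pow M X G act T \<alpha> (Suc n)" by simp
    show ?thesis using r1 r2 unfolding B by simp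
  qed
  let ?S2 = "{B. B \<ge> 2 \<and> kcrit \<alpha> (B - 1) < kcrit \<alpha> B \<and> kcrit \<alpha> B = kcrit \<alpha> (B + 1)}"
  have inf2: "infinite ?S2"
    unfolding infinite_nat_iff_unbounded_le
  proof
    fix N
    obtain m where m: "m \<ge> max N 1" "kcrit \<alpha> m < kcrit \<alpha> (Suc m)" "kcrit \<alpha> (Suc m) = kcrit \<alpha> (Suc (Suc m))"
      using kc_inf[OF assms(8) assms(9)] by blast
    then show "\<exists>B\<ge>N. B \<in> ?S2" by (intro exI[of _ "Suc m"]) auto
  qed
  have sub: "?S2 \<subseteq> {B. B \<ge> 2 \<and> Pow M X G act T \<alpha> (B - 1) < Pow M X G act T \<alpha> B \<and>
                          Pow M X G act T \<alpha> (B + 1) < Pow M X G act T \<alpha> B}"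
  proof
    fix B assume "B \<in> ?S2"
    then have B2: "B \<ge> 2" and l: "kcrit \<alpha> (B - 1) < kcrit \<alpha> B" and e: "kcrit \<alpha> B = kcrit \<alpha> (B + 1)" by auto
    have "kcrit \<alpha> (Suc (B - 1)) \<le> kcrit \<alpha> (B - 1) + 1" by (rule kc_step[OF assms(9)])
    then have "kcrit \<alpha> B - kcrit \<alpha> (B - 1) = 1" using l B2 by simp
    then show "B \<in> {B. B \<ge> 2 \<and> Pow M X G act T \<alpha> (B - 1) < Pow M X G act T \<alpha> B \<and>
                          Pow M X G act T \<alpha> (B + 1) < Pow M X G act T \<alpha> B}"
      using partI[of B] B2 e by simp
  qed
  show ?thesis using partI inf2 infinite_super[OF sub] by blast
qed

end
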